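(* For all integers $n\ge 1$ and $q\ge 2$, $N(H(n,q))=n(q-1)$.
   Context: The Hamming graph $H(n,q)$ has as vertices all words of length $n$ over the alphabet $\{1,\dots,q\}$, two words being adjacent iff they differ in exactly one coordinate. A $t$-address is a $t$-tuple with entries in $\{0,a,b\}$ (three distinct symbols). An addressing of length $t$ of a connected graph $G$ is an assignment of $t$-addresses to the vertices such that for any two vertices $u,v$, the graph distance $d(u,v)$ equals the number of coordinates in which one of the two addresses equals $a$ and the other equals $b$. $N(G)$ is the minimum $t$ such that $G$ has an addressing of length $t$. *)

theory Defs
  imports Main
begin

definition has_walk_of_length :: "'v set \<Rightarrow> ('v \<Rightarrow> 'v \<Rightarrow> bool) \<Rightarrow> 'v \<Rightarrow> 'v \<Rightarrow> nat \<Rightarrow> bool" where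
  "has_walk_of_length V E u v k \<longleftrightarrow>
     (\<exists>p. length p = Suc k \<and> hd p = u \<and> last p = v \<and> set p \<subseteq> V \<and>
          (\<forall>i<k. E (p ! i) (p ! Suc i)))"

definition graph_dist :: "'v set \<Rightarrow> ('v \<Rightarrow> 'v \<Rightarrow> bool) \<Rightarrow> 'v \<Rightarrow> 'v \<Rightarrow> nat" where
  "graph_dist V E u v = (LEAST k. has_walk_of_length V E u v k)"

datatype addr_sym = S0 | Sa | Sb

definition addr_dist :: "nat \<Rightarrow> addr_sym list \<Rightarrow> addr_sym list \<Rightarrow> nat" where
  "addr_dist t x y = card {i. i < t \<and> ((x ! i = Sa \<and> y ! i = Sb) \<or> (x ! i = Sb \<and> y ! i = Sa))}"

definition is_addressing :: "'v set \<Rightarrow> ('v \<Rightarrow> 'v \<Rightarrow> bool) \<Rightarrow> nat \<Rightarrow> ('v \<Rightarrow> addr_sym list) \<Rightarrow> bool" where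
  "is_addressing V E t f \<longleftrightarrow>
     (\<forall>v\<in>V. length (f v) = t) \<and>
     (\<forall>u\<in>V. \<forall>v\<in>V. graph_dist V E u v = addr_dist t (f u) (f v))"

definition addressing_number :: "'v set \<Rightarrow> ('v \<Rightarrow> 'v \<Rightarrow> bool) \<Rightarrow> nat" where
  "addressing_number V E = (LEAST t. \<exists>f. is_addressing V E t f)"

definition hamming_vertices :: "nat \<Rightarrow> nat \<Rightarrow> nat list set" where
  "hamming_vertices n q = {w. length w = n \<and> set w \<subseteq> {1..q}}"

definition hamming_adj :: "nat \<Rightarrow> nat list \<Rightarrow> nat list \<Rightarrow> bool" where
  "hamming_adj n u v \<longleftrightarrow> card {i. i < n \<and> u ! i \<noteq> v ! i} = 1"

end

theory Submission
  imports Defs Complex_Main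
begin

definition hamd :: "nat \<Rightarrow> nat list \<Rightarrow> nat list \<Rightarrow> nat" where
 "hamd n u v = card {i. i < n \<and> u!i \<noteq> v!i}"

lemma hamd_tri: "hamd n u v \<le> hamd n u w + hamd n w v"
proof -
  have "{i. i<n \<and> u!i\<noteq>v!i} \<subseteq> {i. i<n \<and> u!i\<noteq>w!i} \<union> {i. i<n \<and> w!i\<noteq>v!i}" by auto
  hence "card {i. i<n \<and> u!i\<noteq>v!i} \<le> card ({i. i<n \<and> u!i\<noteq>w!i} \<union> {i. i<n \<and> w!i\<noteq>v!i})"
    by (intro card_mono) auto
  also have "\<dots> \<le> card {i. i<n \<and> u!i\<noteq>w!i} + card {i. i<n \<and> w!i\<noteq>v!i}" by (rule card_Un_le)
  finally show ?thesis unfolding hamd_def .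
qed

lemma walk_lower:
  assumes "length p = Suc k" "\<forall>i<k. hamming_adj n (p!i) (p!Suc i)"
  shows "hamd n (hd p) (last p) \<le> k"
  using assms
proof (induction k arbitrary: p)
  case 0
  then obtain x where "p = [x]" by (cases p) auto
  then show ?case by (simp add: hamd_def)
next
  case (Suc k)
  then obtain x p' where p: "p = x # p'" by (cases p) auto
  with Suc.prems have lp: "length p' = Suc k" by simp
  then have ne: "p' \<noteq> []" by auto
  have st: "\<forall>i<k. hamming_adj n (p'!i) (p'!Suc i)"
  proof (intro allI impI)
    fix i assume "i<k" then have "Suc i < Suc k" by simp
    then have "hamming_adj n (p!Suc i) (p!Suc (Suc i))" using Suc.prems(2) by blast
    then show "hamming_adj n (p'!i) (p'!Suc i)" using p by simp
  qed
  have ih: "hamd n (hd p') (last p') \<le> k" using Suc.IH[OF lp st] .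
  have "hamming_adj n (p!0) (p!Suc 0)" using Suc.prems(2) by blast
  hence "hamd n x (hd p') = 1" using ne p by (simp add: hamming_adj_def hamd_def hd_conv_nth)
  moreover have "last p = last p'" using p ne by simp
  ultimately show ?case using hamd_tri[of n x "last p'" "hd p'"] ih p by simp
qed

lemma walk_exists:
  assumes "v \<in> hamming_vertices n q"
  shows "\<forall>u \<in> hamming_vertices n q. hamd n u v = k \<longrightarrow> has_walk_of_length (hamming_vertices n q) (hamming_adj n) u v k"
proof (induction k)
  case 0
  show ?case
  proof (intro ballI impI)
    fix u assume u: "u \<in> hamming_vertices n q" and h: "hamd n u v = 0"
    have fin: "finite {i. i<n \<and> u!i\<noteq>v!i}" by simp
    have "{i. i<n \<and> u!i\<noteq>v!i} = {}" using h fin unfolding hamd_def by simp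
    hence "u = v" using u assms by (intro nth_equalityI) (auto simp: hamming_vertices_def)
    thus "has_walk_of_length (hamming_vertices n q) (hamming_adj n) u v 0"
      using u unfolding has_walk_of_length_def by (intro exI[of _ "[u]"]) auto
  qed
next
  case (Suc k)
  show ?case
  proof (intro ballI impI)
    fix u assume u: "u \<in> hamming_vertices n q" and h: "hamd n u v = Suc k"
    let ?D = "{i. i<n \<and> u!i\<noteq>v!i}"
    have "?D \<noteq> {}" using h unfolding hamd_def by (metis card.empty nat.simps(3))
    then obtain i where i: "i<n" "u!i \<noteq> v!i" by auto
    define u' where "u' = u[i := v!i]"
    have lu: "length u = n" "set u \<subseteq> {1..q}" and lv: "length v = n" "set v \<subseteq> {1..q}"
      using u assms by (auto simp: hamming_vertices_def)
    have vi: "v!i \<in> {1..q}" using lv i nth_mem[of i v] by blast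
    have u'V: "u' \<in> hamming_vertices n q" unfolding u'_def hamming_vertices_def
      using lu vi set_update_subset_insert[of u i "v!i"] by auto
    have "{j. j<n \<and> u'!j \<noteq> v!j} = ?D - {i}" using lu i by (auto simp: u'_def nth_list_update)
    hence hu': "hamd n u' v = k" using h i unfolding hamd_def by (simp add: card_Diff_singleton)
    have "{j. j<n \<and> u!j \<noteq> u'!j} = {i}" using lu i by (auto simp: u'_def nth_list_update)
    hence adj: "hamming_adj n u u'" by (simp add: hamming_adj_def)
    obtain p where p: "length p = Suc k" "hd p = u'" "last p = v" "set p \<subseteq> hamming_vertices n q"
         "\<forall>j<k. hamming_adj n (p!j) (p!Suc j)"
      using Suc.IH u'V hu' unfolding has_walk_of_length_def by blast
    have ne: "p \<noteq> []" using p by auto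
    show "has_walk_of_length (hamming_vertices n q) (hamming_adj n) u v (Suc k)"
      unfolding has_walk_of_length_def
    proof (intro exI[of _ "u # p"] conjI)
      show "\<forall>j<Suc k. hamming_adj n ((u#p)!j) ((u#p)!Suc j)"
      proof (intro allI impI)
        fix j assume j: "j < Suc k"
        show "hamming_adj n ((u#p)!j) ((u#p)!Suc j)"
        proof (cases j)
          case 0 then show ?thesis using adj ne p(2) by (simp add: hd_conv_nth)
        next
          case (Suc j') then show ?thesis using p(5) j by simp
        qed
      qed
    qed (use p ne u in auto)
  qed
qed

lemma graph_dist_eq:
  assumes "u \<in> hamming_vertices n q" "v \<in> hamming_vertices n q"
  shows "graph_dist (hamming_vertices n q) (hamming_adj n) u v = hamd n u v"
  unfolding graph_dist_def
proof (rule Least_equality)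
  show "has_walk_of_length (hamming_vertices n q) (hamming_adj n) u v (hamd n u v)"
    using walk_exists[OF assms(2)] assms(1) by blast
next
  fix k assume "has_walk_of_length (hamming_vertices n q) (hamming_adj n) u v k"
  then obtain p where "length p = Suc k" "hd p = u" "last p = v" "\<forall>i<k. hamming_adj n (p!i) (p!Suc i)"
    unfolding has_walk_of_length_def by blast
  thus "hamd n u v \<le> k" using walk_lower by metis
qed


lemma homog_nonzero:
  fixes a :: "nat \<Rightarrow> 'j \<Rightarrow> real"
  assumes "finite J" "card J > T"
  shows "\<exists>c. (\<exists>j\<in>J. c j \<noteq> 0) \<and> (\<forall>k<T. (\<Sum>j\<in>J. a k j * c j) = 0)"
  using assms
proof (induction T arbitrary: J a)
  case 0
  then have "J \<noteq> {}" by auto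
  then obtain j where "j \<in> J" by auto
  then show ?case by (intro exI[of _ "\<lambda>_. 1"]) auto
next
  case (Suc T)
  show ?case
  proof (cases "\<forall>j\<in>J. a 0 j = 0")
    case True
    obtain c where c: "\<exists>j\<in>J. c j \<noteq> 0" "\<forall>k<T. (\<Sum>j\<in>J. a (Suc k) j * c j) = 0"
      using Suc.IH[of J "\<lambda>k. a (Suc k)"] Suc.prems by auto
    have "\<forall>k<Suc T. (\<Sum>j\<in>J. a k j * c j) = 0"
    proof (intro allI impI)
      fix k assume "k < Suc T"
      then show "(\<Sum>j\<in>J. a k j * c j) = 0" using c(2) True by (cases k) auto
    qed
    then show ?thesis using c(1) by blast
  next
    case False
    then obtain j0 where j0: "j0 \<in> J" "a 0 j0 \<noteq> 0" by auto
    define J' where "J' = J - {j0}"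
    have fJ': "finite J'" using Suc.prems by (simp add: J'_def)
    have cJ': "card J' > T" using Suc.prems j0 by (simp add: J'_def card_Diff_singleton)
    define a' where "a' k j = a (Suc k) j - a (Suc k) j0 * a 0 j / a 0 j0" for k j
    obtain c' where c': "\<exists>j\<in>J'. c' j \<noteq> 0" "\<forall>k<T. (\<Sum>j\<in>J'. a' k j * c' j) = 0"
      using Suc.IH[OF fJ' cJ'] by blast
    define c where "c j = (if j = j0 then - (\<Sum>j\<in>J'. a 0 j * c' j) / a 0 j0 else c' j)" for j
    have sumJ: "(\<Sum>j\<in>J. g j * c j) = g j0 * c j0 + (\<Sum>j\<in>J'. g j * c' j)" for g
    proof -
      have "(\<Sum>j\<in>J. g j * c j) = g j0 * c j0 + (\<Sum>j\<in>J'. g j * c j)"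
        using Suc.prems(1) j0(1) unfolding J'_def by (simp add: sum.remove)
      also have "(\<Sum>j\<in>J'. g j * c j) = (\<Sum>j\<in>J'. g j * c' j)"
        by (rule sum.cong) (auto simp: c_def J'_def)
      finally show ?thesis .
    qed
    have "\<forall>k<Suc T. (\<Sum>j\<in>J. a k j * c j) = 0"
    proof (intro allI impI)
      fix k assume k: "k < Suc T"
      show "(\<Sum>j\<in>J. a k j * c j) = 0"
      proof (cases k)
        case 0
        have "(\<Sum>j\<in>J. a 0 j * c j) = a 0 j0 * c j0 + (\<Sum>j\<in>J'. a 0 j * c' j)" by (rule sumJ)
        then show ?thesis using 0 j0(2) by (simp add: c_def)
      next
        case (Suc k')
        have e1: "(\<Sum>j\<in>J'. a' k' j * c' j) = (\<Sum>j\<in>J'. a k j * c' j) - a k j0 / a 0 j0 * (\<Sum>j\<in>J'. a 0 j * c' j)"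
          unfolding sum_distrib_left sum_subtractf[symmetric]
          by (rule sum.cong) (auto simp: a'_def Suc field_simps)
        have "(\<Sum>j\<in>J. a k j * c j) = a k j0 * c j0 + (\<Sum>j\<in>J'. a k j * c' j)" by (rule sumJ)
        also have "\<dots> = (\<Sum>j\<in>J'. a' k' j * c' j)"
          unfolding e1 using j0(2) by (simp add: c_def field_simps)
        also have "\<dots> = 0" using c'(2) k Suc by simp
        finally show ?thesis .
      qed
    qed
    moreover have "\<exists>j\<in>J. c j \<noteq> 0" using c'(1) by (auto simp: c_def J'_def)
    ultimately show ?thesis by blast
  qed
qed

definition kcode :: "nat \<Rightarrow> nat \<Rightarrow> addr_sym" where
  "kcode x k = (if k < x then Sb else if k = x then Sa else S0)"

definition haddr :: "nat \<Rightarrow> nat \<Rightarrow> nat list \<Rightarrow> addr_sym list" where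
  "haddr n m w = map (\<lambda>j. kcode (w ! (j div m)) (j mod m + 1)) [0..<n*m]"

lemma kcode_pair: "((kcode x k = Sa \<and> kcode y k = Sb) \<or> (kcode x k = Sb \<and> kcode y k = Sa)) \<longleftrightarrow> (x \<noteq> y \<and> k = min x y)"
  by (auto simp: kcode_def)

lemma minb: "(x::nat) \<in> {1..q} \<Longrightarrow> y \<in> {1..q} \<Longrightarrow> x \<noteq> y \<Longrightarrow> min x y - 1 < q - 1"
  by (auto simp: min_def)

lemma divh: "(r::nat) < m \<Longrightarrow> (i*m + r) div m = i" by simp

lemma haddr_dist:
  assumes "length u = n" "set u \<subseteq> {1..q}" "length v = n" "set v \<subseteq> {1..q}" "q \<ge> 2"
  shows "addr_dist (n*(q-1)) (haddr n (q-1) u) (haddr n (q-1) v) = hamd n u v"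
proof -
  define m where "m = q - 1"
  have m: "m \<ge> 1" using assms by (simp add: m_def)
  have mem: "u!i \<in> {1..q}" "v!i \<in> {1..q}" if "i < n" for i
  proof -
    have "u!i \<in> set u" "v!i \<in> set v" using that assms(1,3) by simp_all
    then show "u!i \<in> {1..q}" "v!i \<in> {1..q}" using assms(2,4) by blast+
  qed
  have "{j. j < n*m \<and> ((haddr n m u ! j = Sa \<and> haddr n m v ! j = Sb) \<or> (haddr n m u ! j = Sb \<and> haddr n m v ! j = Sa))}
      = {j. j < n*m \<and> u!(j div m) \<noteq> v!(j div m) \<and> j mod m + 1 = min (u!(j div m)) (v!(j div m))}"
    apply (rule Collect_cong)
    subgoal for j using kcode_pair[of "u!(j div m)" "j mod m + 1" "v!(j div m)"]
      by (cases "j < n*m") (simp_all add: haddr_def)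
    done
  also have "\<dots> = (\<lambda>i. i * m + (min (u!i) (v!i) - 1)) ` {i. i<n \<and> u!i \<noteq> v!i}"
  proof
    show "{j. j < n*m \<and> u!(j div m) \<noteq> v!(j div m) \<and> j mod m + 1 = min (u!(j div m)) (v!(j div m))}
       \<subseteq> (\<lambda>i. i * m + (min (u!i) (v!i) - 1)) ` {i. i<n \<and> u!i \<noteq> v!i}"
    proof
      fix j assume j: "j \<in> {j. j < n*m \<and> u!(j div m) \<noteq> v!(j div m) \<and> j mod m + 1 = min (u!(j div m)) (v!(j div m))}"
      define i where "i = j div m"
      have i: "i < n" using j less_mult_imp_div_less[of j n m] by (simp add: i_def)
      have e0: "j = i * m + j mod m" by (simp add: i_def)
      have e: "j mod m + 1 = min (u!i) (v!i)" using j by (simp add: i_def)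
      have "j mod m = min (u!i) (v!i) - 1" using e by linarith
      hence "j = i * m + (min (u!i) (v!i) - 1)" using e0 by simp
      moreover have "i \<in> {i. i<n \<and> u!i \<noteq> v!i}" using i j unfolding i_def by blast
      ultimately show "j \<in> (\<lambda>i. i * m + (min (u!i) (v!i) - 1)) ` {i. i<n \<and> u!i \<noteq> v!i}"
        by (rule image_eqI)
    qed
  next
    show "(\<lambda>i. i * m + (min (u!i) (v!i) - 1)) ` {i. i<n \<and> u!i \<noteq> v!i}
       \<subseteq> {j. j < n*m \<and> u!(j div m) \<noteq> v!(j div m) \<and> j mod m + 1 = min (u!(j div m)) (v!(j div m))}"
    proof
      fix j assume "j \<in> (\<lambda>i. i * m + (min (u!i) (v!i) - 1)) ` {i. i<n \<and> u!i \<noteq> v!i}"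
      then obtain i where i: "i<n" "u!i\<noteq>v!i" "j = i * m + (min (u!i) (v!i) - 1)" by auto
      have b1: "min (u!i) (v!i) \<ge> 1" using mem[OF i(1)] by auto
      have b2: "min (u!i) (v!i) - 1 < m" using mem[OF i(1)] i(2) by (auto simp: m_def)
      have d: "j div m = i" "j mod m = min (u!i) (v!i) - 1" using b2 i(3) m by simp_all
      have "j < (i+1) * m" using b2 i(3) by simp
      also have "\<dots> \<le> n * m" using i(1) by (intro mult_right_mono) auto
      finally have jlt: "j < n * m" .
      have dm: "j mod m + 1 = min (u!i) (v!i)" using d(2) b1 by linarith
      show "j \<in> {j. j < n*m \<and> u!(j div m) \<noteq> v!(j div m) \<and> j mod m + 1 = min (u!(j div m)) (v!(j div m))}"
        unfolding mem_Collect_eq d(1) using jlt dm i(2) by blast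
    qed
  qed
  finally have eq: "{j. j < n*m \<and> ((haddr n m u ! j = Sa \<and> haddr n m v ! j = Sb) \<or> (haddr n m u ! j = Sb \<and> haddr n m v ! j = Sa))}
     = (\<lambda>i. i * m + (min (u!i) (v!i) - 1)) ` {i. i<n \<and> u!i \<noteq> v!i}" .
  have inj: "inj_on (\<lambda>i. i * m + (min (u!i) (v!i) - 1)) {i. i<n \<and> u!i \<noteq> v!i}"
  proof (rule inj_onI)
    fix i i' assume i: "i \<in> {i. i<n \<and> u!i \<noteq> v!i}" and i': "i' \<in> {i. i<n \<and> u!i \<noteq> v!i}"
      and e: "i * m + (min (u!i) (v!i) - 1) = i' * m + (min (u!i') (v!i') - 1)"
    have ii: "i < n" "u!i \<noteq> v!i" "i' < n" "u!i' \<noteq> v!i'" using i i' by blast+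
    have m1: "u!i \<in> {1..q}" "v!i \<in> {1..q}" using mem[OF ii(1)] by blast+
    have m2: "u!i' \<in> {1..q}" "v!i' \<in> {1..q}" using mem[OF ii(3)] by blast+
    have b: "min (u!i) (v!i) - 1 < m" "min (u!i') (v!i') - 1 < m"
      unfolding m_def using minb[OF m1 ii(2)] minb[OF m2 ii(4)] by blast+
    have "(i * m + (min (u!i) (v!i) - 1)) div m = i" using b(1) by (rule divh)
    moreover have "(i' * m + (min (u!i') (v!i') - 1)) div m = i'" using b(2) by (rule divh)
    ultimately show "i = i'" using e by metis
  qed
  have "addr_dist (n*m) (haddr n m u) (haddr n m v) = card {i. i<n \<and> u!i \<noteq> v!i}"
    unfolding addr_dist_def eq by (rule card_image[OF inj])
  then show ?thesis unfolding hamd_def m_def .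
qed


lemma card_real: fixes t :: nat shows "real (card {i. i < t \<and> P i}) = (\<Sum>i<t. if P i then 1 else 0)"
proof (induction t)
  case 0 then show ?case by simp
next
  case (Suc t)
  have e: "{i. i < Suc t \<and> P i} = (if P t then insert t {i. i < t \<and> P i} else {i. i < t \<and> P i})"
    by (auto simp: less_Suc_eq)
  show ?case using Suc by (simp add: e)
qed

lemma swap3: "(\<Sum>k\<in>K. \<Sum>p\<in>P. \<Sum>p'\<in>P'. (F k p p' :: real)) = (\<Sum>p\<in>P. \<Sum>p'\<in>P'. \<Sum>k\<in>K. F k p p')"
proof -
  have "(\<Sum>k\<in>K. \<Sum>p\<in>P. \<Sum>p'\<in>P'. F k p p') = (\<Sum>p\<in>P. \<Sum>k\<in>K. \<Sum>p'\<in>P'. F k p p')" by (rule sum.swap)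
  also have "\<dots> = (\<Sum>p\<in>P. \<Sum>p'\<in>P'. \<Sum>k\<in>K. F k p p')" by (rule sum.cong[OF refl], rule sum.swap)
  finally show ?thesis .
qed

lemma lower_bound:
  assumes adr: "is_addressing (hamming_vertices n q) (hamming_adj n) t f" and q2: "q \<ge> 2"
  shows "n * (q-1) \<le> t"
proof (rule ccontr)
  assume "\<not> ?thesis" hence lt: "t < n*(q-1)" by simp
  define V where "V = hamming_vertices n q"
  define I where "I = {..<n} \<times> {2..q}"
  define b where "b = (n, 1::nat)"
  define J where "J = insert b I"
  define w where "w p = (replicate n (1::nat))[fst p := snd p]" for p :: "nat \<times> nat"
  define A where "A k u = (if f u ! k = Sa then 1 else 0 :: real)" for k u
  define B where "B k u = (if f u ! k = Sb then 1 else 0 :: real)" for k u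
  have bI: "b \<notin> I" by (simp add: b_def I_def)
  have fI: "finite I" by (simp add: I_def)
  have cardI: "card I = n * (q-1)" by (simp add: I_def card_cartesian_product)
  have fJ: "finite J" using fI by (simp add: J_def)
  have cardJ: "card J = n*(q-1) + 1" using fI bI cardI by (simp add: J_def)
  have wnth: "w p ! k = (if k = fst p then snd p else 1)" if "k < n" for p k
    using that by (simp add: w_def nth_list_update)
  have wV: "w p \<in> V" if "p \<in> J" for p
  proof -
    have sp: "snd p \<in> {1..q}" using that q2 by (auto simp: J_def I_def b_def)
    have "set (w p) \<subseteq> insert (snd p) (set (replicate n (1::nat)))"
      unfolding w_def by (rule set_update_subset_insert)
    also have "\<dots> \<subseteq> {1..q}" using sp q2 by (auto simp: set_replicate_conv_if)
    finally show ?thesis unfolding V_def hamming_vertices_def by (simp add: w_def)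
  qed
  obtain c where c0: "\<exists>p\<in>J. c p \<noteq> 0"
    and cc: "\<forall>k<Suc t. (\<Sum>p\<in>J. (if k < t then A k (w p) else 1) * c p) = 0"
    using homog_nonzero[OF fJ, of "Suc t" "\<lambda>k p. if k < t then A k (w p) else 1"] cardJ lt by auto
  have C1: "(\<Sum>p\<in>J. c p * A k (w p)) = 0" if "k < t" for k
  proof -
    have "k < Suc t" using that by simp
    then have "(\<Sum>p\<in>J. (if k < t then A k (w p) else 1) * c p) = 0" using cc by blast
    then show ?thesis using that by (simp add: mult.commute)
  qed
  have C2: "(\<Sum>p\<in>J. c p) = 0" using cc by auto
  have addr: "real (hamd n u v) = (\<Sum>k<t. A k u * B k v + B k u * A k v)" if "u \<in> V" "v \<in> V" for u v
  proof -
    have "graph_dist V (hamming_adj n) u v = addr_dist t (f u) (f v)"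
      using adr that unfolding is_addressing_def V_def by blast
    then have "hamd n u v = addr_dist t (f u) (f v)"
      using graph_dist_eq[of u n q v] that unfolding V_def by simp
    also have "real (addr_dist t (f u) (f v)) = (\<Sum>k<t. A k u * B k v + B k u * A k v)"
      unfolding addr_dist_def card_real by (rule sum.cong) (auto simp: A_def B_def)
    finally show ?thesis .
  qed
  define Q where "Q = (\<Sum>p\<in>J. \<Sum>p'\<in>J. c p * c p' * real (hamd n (w p) (w p')))"
  have Q0: "Q = 0"
  proof -
    have "(0::real) = (\<Sum>k<t. (\<Sum>p\<in>J. c p * A k (w p)) * (\<Sum>p'\<in>J. c p' * B k (w p'))
                         + (\<Sum>p\<in>J. c p * B k (w p)) * (\<Sum>p'\<in>J. c p' * A k (w p')))"
      using C1 by simp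
    also have "\<dots> = (\<Sum>k<t. \<Sum>p\<in>J. \<Sum>p'\<in>J. c p * c p' * (A k (w p) * B k (w p') + B k (w p) * A k (w p')))"
    proof (rule sum.cong[OF refl])
      fix k
      have "(\<Sum>p\<in>J. \<Sum>p'\<in>J. c p * c p' * (A k (w p) * B k (w p') + B k (w p) * A k (w p')))
          = (\<Sum>p\<in>J. \<Sum>p'\<in>J. (c p * A k (w p)) * (c p' * B k (w p')) + (c p * B k (w p)) * (c p' * A k (w p')))"
        by (intro sum.cong refl) (simp add: algebra_simps)
      also have "\<dots> = (\<Sum>p\<in>J. c p * A k (w p)) * (\<Sum>p'\<in>J. c p' * B k (w p'))
                         + (\<Sum>p\<in>J. c p * B k (w p)) * (\<Sum>p'\<in>J. c p' * A k (w p'))"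
        by (simp only: sum.distrib sum_product)
      finally show "(\<Sum>p\<in>J. c p * A k (w p)) * (\<Sum>p'\<in>J. c p' * B k (w p'))
                         + (\<Sum>p\<in>J. c p * B k (w p)) * (\<Sum>p'\<in>J. c p' * A k (w p'))
          = (\<Sum>p\<in>J. \<Sum>p'\<in>J. c p * c p' * (A k (w p) * B k (w p') + B k (w p) * A k (w p')))"
        by simp
    qed
    also have "\<dots> = (\<Sum>p\<in>J. \<Sum>p'\<in>J. \<Sum>k<t. c p * c p' * (A k (w p) * B k (w p') + B k (w p) * A k (w p')))"
      by (rule swap3)
    also have "\<dots> = Q" unfolding Q_def
      by (intro sum.cong refl) (simp add: addr wV sum_distrib_left)
    finally show ?thesis by simp
  qed
  define E where "E k a p = (if w p ! k = a then 1 else 0 :: real)" for k a p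
  have ham: "real (hamd n (w p) (w p')) = (\<Sum>k<n. 1 - (\<Sum>a\<in>{1..q}. E k a p * E k a p'))"
    if "p\<in>J" "p'\<in>J" for p p'
  proof -
    have "real (hamd n (w p) (w p')) = (\<Sum>k<n. if w p ! k \<noteq> w p' ! k then 1 else 0)"
      unfolding hamd_def by (rule card_real)
    also have "\<dots> = (\<Sum>k<n. 1 - (\<Sum>a\<in>{1..q}. E k a p * E k a p'))"
    proof (rule sum.cong[OF refl])
      fix k assume k: "k \<in> {..<n}"
      have "w p ! k \<in> set (w p)" using k wV[OF that(1)] by (simp add: V_def hamming_vertices_def)
      then have mem: "w p ! k \<in> {1..q}" using wV[OF that(1)] by (auto simp: V_def hamming_vertices_def)
      have "(\<Sum>a\<in>{1..q}. E k a p * E k a p') = (\<Sum>a\<in>{1..q}. if a = w p ! k then (if w p' ! k = a then 1 else 0) else 0)"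
        by (rule sum.cong) (auto simp: E_def)
      also have "\<dots> = (if w p' ! k = w p ! k then 1 else 0)" using mem by (simp add: sum.delta)
      finally show "(if w p ! k \<noteq> w p' ! k then 1 else 0) = 1 - (\<Sum>a\<in>{1..q}. E k a p * E k a p')"
        by auto
    qed
    finally show ?thesis .
  qed
  have Qh: "Q = - (\<Sum>k<n. \<Sum>a\<in>{1..q}. (\<Sum>p\<in>J. c p * E k a p)^2)"
  proof -
    have "Q = (\<Sum>p\<in>J. \<Sum>p'\<in>J. \<Sum>k<n. c p * c p' - (\<Sum>a\<in>{1..q}. (c p * E k a p) * (c p' * E k a p')))"
      unfolding Q_def
      by (intro sum.cong refl) (simp add: ham sum_distrib_left right_diff_distrib sum_subtractf mult_ac)
    also have "\<dots> = (\<Sum>k<n. \<Sum>p\<in>J. \<Sum>p'\<in>J. c p * c p' - (\<Sum>a\<in>{1..q}. (c p * E k a p) * (c p' * E k a p')))"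
      by (rule swap3[symmetric])
    also have "\<dots> = (\<Sum>k<n. (\<Sum>p\<in>J. c p) * (\<Sum>p'\<in>J. c p') - (\<Sum>a\<in>{1..q}. (\<Sum>p\<in>J. c p * E k a p) * (\<Sum>p'\<in>J. c p' * E k a p')))"
    proof (rule sum.cong[OF refl])
      fix k
      have "(\<Sum>p\<in>J. \<Sum>p'\<in>J. \<Sum>a\<in>{1..q}. (c p * E k a p) * (c p' * E k a p'))
           = (\<Sum>a\<in>{1..q}. \<Sum>p\<in>J. \<Sum>p'\<in>J. (c p * E k a p) * (c p' * E k a p'))"
        by (rule swap3[symmetric])
      then show "(\<Sum>p\<in>J. \<Sum>p'\<in>J. c p * c p' - (\<Sum>a\<in>{1..q}. (c p * E k a p) * (c p' * E k a p')))
          = (\<Sum>p\<in>J. c p) * (\<Sum>p'\<in>J. c p') - (\<Sum>a\<in>{1..q}. (\<Sum>p\<in>J. c p * E k a p) * (\<Sum>p'\<in>J. c p' * E k a p'))"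
        by (simp add: sum_subtractf sum_product)
    qed
    also have "\<dots> = - (\<Sum>k<n. \<Sum>a\<in>{1..q}. (\<Sum>p\<in>J. c p * E k a p)^2)"
      using C2 by (simp add: power2_eq_square sum_negf)
    finally show ?thesis .
  qed
  have sq0: "(\<Sum>p\<in>J. c p * E i a p) = 0" if "i<n" "a\<in>{1..q}" for i a
  proof -
    have "(\<Sum>k<n. \<Sum>a\<in>{1..q}. (\<Sum>p\<in>J. c p * E k a p)^2) = 0" using Q0 Qh by simp
    then have "\<forall>k\<in>{..<n}. (\<Sum>a\<in>{1..q}. (\<Sum>p\<in>J. c p * E k a p)^2) = 0"
      by (subst (asm) sum_nonneg_eq_0_iff) (auto intro: sum_nonneg)
    then have "(\<Sum>a\<in>{1..q}. (\<Sum>p\<in>J. c p * E i a p)^2) = 0" using that by auto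
    then have "\<forall>a\<in>{1..q}. (\<Sum>p\<in>J. c p * E i a p)^2 = 0"
      by (subst (asm) sum_nonneg_eq_0_iff) auto
    then show ?thesis using that by auto
  qed
  have cI: "c p = 0" if pI: "p \<in> I" for p
  proof -
    obtain i a where p: "p = (i,a)" "i<n" "a\<in>{2..q}" using pI unfolding I_def by blast
    have "(\<Sum>p'\<in>J. c p' * E i a p') = (\<Sum>p'\<in>J. if p' = p then c p' else 0)"
    proof (rule sum.cong[OF refl])
      fix p' assume "p' \<in> J"
      show "c p' * E i a p' = (if p' = p then c p' else 0)"
        using p by (cases p') (auto simp: E_def wnth)
    qed
    also have "\<dots> = c p" using pI fI by (simp add: J_def)
    finally show ?thesis using sq0[of i a] p by simp
  qed
  have "(\<Sum>p\<in>J. c p) = c b + (\<Sum>p\<in>I. c p)" using fI bI by (simp add: J_def)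
  also have "(\<Sum>p\<in>I. c p) = 0" using cI by simp
  finally have "c b = 0" using C2 by simp
  then show False using c0 cI J_def by auto
qed


theorem theorem13:
  fixes n q :: nat
  assumes "n \<ge> 1" and "q \<ge> 2"
  shows "addressing_number (hamming_vertices n q) (hamming_adj n) = n * (q - 1)"
proof -
  have ex: "is_addressing (hamming_vertices n q) (hamming_adj n) (n*(q-1)) (haddr n (q-1))"
    unfolding is_addressing_def
  proof (intro conjI ballI)
    fix v assume "v \<in> hamming_vertices n q"
    show "length (haddr n (q-1) v) = n*(q-1)" by (simp add: haddr_def)
  next
    fix u v assume u: "u \<in> hamming_vertices n q" and v: "v \<in> hamming_vertices n q"
    have "graph_dist (hamming_vertices n q) (hamming_adj n) u v = hamd n u v"
      by (rule graph_dist_eq[OF u v])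
    also have "\<dots> = addr_dist (n*(q-1)) (haddr n (q-1) u) (haddr n (q-1) v)"
      using u v assms(2) by (intro haddr_dist[symmetric]) (auto simp: hamming_vertices_def)
    finally show "graph_dist (hamming_vertices n q) (hamming_adj n) u v
        = addr_dist (n*(q-1)) (haddr n (q-1) u) (haddr n (q-1) v)" .
  qed
  show ?thesis unfolding addressing_number_def
  proof (rule Least_equality)
    show "\<exists>f. is_addressing (hamming_vertices n q) (hamming_adj n) (n * (q - 1)) f" using ex by blast
  next
    fix t assume "\<exists>f. is_addressing (hamming_vertices n q) (hamming_adj n) t f"
    then obtain f where "is_addressing (hamming_vertices n q) (hamming_adj n) t f" by blast
    then show "n * (q - 1) \<le> t" using lower_bound assms(2) by blast
  qed
qed

end
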